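(* Let $P_1,P_2,N>0$. If $\sigma_1^2\ge P_1\big(\frac32+\frac{P_2}{N}\big)$ and $\sigma_2^2\ge P_2\big(\frac32+\frac{P_1}{N}\big)$, then $\mathcal R_{\mathrm{Car}}(P_1,P_2,N,\sigma_1^2,\sigma_2^2)=\mathcal C_{\mathrm{MAC}}(P_1,P_2,N)$.
   Context: Notation: for $x\in[0,1]$, $\bar x=1-x$; $L(a,b)=\frac12\log(1+\frac ab)$; and $G=\bar\alpha_1P_1+\bar\alpha_2P_2+2\sqrt{\bar\alpha_1\bar\alpha_2P_1P_2}$, $H=N+\alpha_1P_1+\alpha_2P_2$. The region $\mathcal R_{\mathrm{Car}}(P_1,P_2,N,\sigma_1^2,\sigma_2^2)$ (for $\sigma_1^2,\sigma_2^2\ge0$) is the set of pairs $(R_1,R_2)$ for which there exist nonnegative $R_{1,0},R_{1,1}$ with $R_{1,0}+R_{1,1}=R_1$, nonnegative $R_{2,0},R_{2,2}$ with $R_{2,0}+R_{2,2}=R_2$, and $\alpha_1,\alpha_2,\beta_1,\beta_2,\upsilon\in[0,1]$ such that: $R_{1,0}\le L(\alpha_1\bar\beta_1P_1,\ \alpha_1\beta_1P_1+N+\sigma_2^2)$; $R_{2,0}\le L(\alpha_2\bar\beta_2P_2,\ \alpha_2\beta_2P_2+N+\sigma_1^2)$; $R_{1,1}\le L(\alpha_1\beta_1P_1,N)$; $R_{2,2}\le L(\alpha_2\beta_2P_2,N)$; $R_{1,0}+R_{2,0}\le L(\alpha_1\bar\beta_1P_1+\alpha_2\bar\beta_2P_2,N)+L(G,H)$;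 $R_{1,0}+R_{2,2}\le L(\alpha_1\bar\beta_1P_1+\alpha_2\beta_2P_2,N)+L(\upsilon G,H)$; $R_{2,0}+R_{1,1}\le L(\alpha_1\beta_1P_1+\alpha_2\bar\beta_2P_2,N)+L(\bar\upsilon G,H)$; $R_{1,1}+R_{2,2}\le L(\alpha_1\beta_1P_1+\alpha_2\beta_2P_2,N)$; $R_1+R_{2,0}\le L(\alpha_1P_1+\alpha_2\bar\beta_2P_2,N)+L(G,H)$; $R_{1,0}+R_2\le L(\alpha_1\bar\beta_1P_1+\alpha_2P_2,N)+L(G,H)$; $R_1+R_{2,2}\le L(\alpha_1P_1+\alpha_2\beta_2P_2,N)+L(\upsilon G,H)$; $R_{1,1}+R_2\le L(\alpha_1\beta_1P_1+\alpha_2P_2,N)+L(\bar\upsilon G,H)$; $R_1+R_2\le L(P_1+P_2+2\sqrt{\bar\alpha_1\bar\alpha_2P_1P_2},N)$. The no-feedback capacity region $\mathcal C_{\mathrm{MAC}}(P_1,P_2,N)$ is the set of nonnegative $(R_1,R_2)$ with $R_1\le\frac12\log(1+\frac{P_1}{N})$, $R_2\le\frac12\log(1+\frac{P_2}{N})$, $R_1+R_2\le\frac12\log(1+\frac{P_1+P_2}{N})$. *)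

theory Defs
  imports "HOL-Analysis.Analysis"
begin

text \<open>Logarithms are taken in base 2 (bits); the region equality does not depend on the base.\<close>

definition Lf :: "real \<Rightarrow> real \<Rightarrow> real" where
  "Lf a b = (1/2) * log 2 (1 + a / b)"

definition Gf :: "real \<Rightarrow> real \<Rightarrow> real \<Rightarrow> real \<Rightarrow> real" where
  "Gf a1 a2 P1 P2 = (1 - a1) * P1 + (1 - a2) * P2 + 2 * sqrt ((1 - a1) * (1 - a2) * P1 * P2)"

definition Hf :: "real \<Rightarrow> real \<Rightarrow> real \<Rightarrow> real \<Rightarrow> real \<Rightarrow> real" where
  "Hf a1 a2 P1 P2 N = N + a1 * P1 + a2 * P2"

definition R_Car :: "real \<Rightarrow> real \<Rightarrow> real \<Rightarrow> real \<Rightarrow> real \<Rightarrow> (real \<times> real) set" where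
  "R_Car P1 P2 N s1 s2 = {(R1, R2). \<exists>R10 R11 R20 R22 a1 a2 b1 b2 u.
     0 \<le> R10 \<and> 0 \<le> R11 \<and> R10 + R11 = R1 \<and>
     0 \<le> R20 \<and> 0 \<le> R22 \<and> R20 + R22 = R2 \<and>
     a1 \<in> {0..1} \<and> a2 \<in> {0..1} \<and> b1 \<in> {0..1} \<and> b2 \<in> {0..1} \<and> u \<in> {0..1} \<and>
     (let G = Gf a1 a2 P1 P2; H = Hf a1 a2 P1 P2 N in
       R10 \<le> Lf (a1 * (1 - b1) * P1) (a1 * b1 * P1 + N + s2) \<and>
       R20 \<le> Lf (a2 * (1 - b2) * P2) (a2 * b2 * P2 + N + s1) \<and>
       R11 \<le> Lf (a1 * b1 * P1) N \<and>
       R22 \<le> Lf (a2 * b2 * P2) N \<and>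
       R10 + R20 \<le> Lf (a1 * (1 - b1) * P1 + a2 * (1 - b2) * P2) N + Lf G H \<and>
       R10 + R22 \<le> Lf (a1 * (1 - b1) * P1 + a2 * b2 * P2) N + Lf (u * G) H \<and>
       R20 + R11 \<le> Lf (a1 * b1 * P1 + a2 * (1 - b2) * P2) N + Lf ((1 - u) * G) H \<and>
       R11 + R22 \<le> Lf (a1 * b1 * P1 + a2 * b2 * P2) N \<and>
       R1 + R20 \<le> Lf (a1 * P1 + a2 * (1 - b2) * P2) N + Lf G H \<and>
       R10 + R2 \<le> Lf (a1 * (1 - b1) * P1 + a2 * P2) N + Lf G H \<and>
       R1 + R22 \<le> Lf (a1 * P1 + a2 * b2 * P2) N + Lf (u * G) H \<and>
       R11 + R2 \<le> Lf (a1 * b1 * P1 + a2 * P2) N + Lf ((1 - u) * G) H \<and>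
       R1 + R2 \<le> Lf (P1 + P2 + 2 * sqrt ((1 - a1) * (1 - a2) * P1 * P2)) N)}"

definition C_MAC :: "real \<Rightarrow> real \<Rightarrow> real \<Rightarrow> (real \<times> real) set" where
  "C_MAC P1 P2 N = {(R1, R2). 0 \<le> R1 \<and> 0 \<le> R2 \<and>
     R1 \<le> (1/2) * log 2 (1 + P1 / N) \<and> R2 \<le> (1/2) * log 2 (1 + P2 / N) \<and>
     R1 + R2 \<le> (1/2) * log 2 (1 + (P1 + P2) / N)}"

end

theory Submission
  imports Defs
begin

lemma log2_add2:
  fixes p q t :: real
  assumes "0<p" "0<q" "p*q \<le> t"
  shows "log 2 p + log 2 q \<le> log 2 t"
proof -
  have "log 2 p + log 2 q = log 2 (p*q)" using assms by (simp add: log_mult_pos)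
  also have "\<dots> \<le> log 2 t" using assms by (intro log_mono) auto
  finally show ?thesis .
qed

lemma log2_add3:
  fixes p q r t :: real
  assumes "0<p" "0<q" "0<r" "p*q*r \<le> t"
  shows "log 2 p + log 2 q + log 2 r \<le> log 2 t"
proof -
  have "log 2 p + log 2 q + log 2 r = log 2 (p*q*r)" using assms by (simp add: log_mult_pos)
  also have "\<dots> \<le> log 2 t" using assms by (intro log_mono) auto
  finally show ?thesis .
qed

lemma poly_sum:
  fixes N A B D y1 y2 :: real
  assumes "N>0" "y1\<ge>0" "y2\<ge>0" "D \<ge> N" "A - D \<ge> y2" "B \<ge> D"
  shows "(A+y1)*(B+y2)*D \<le> (D+y1+y2)*A*B"
proof -
  have "y1*D*y2 \<le> y1*B*(A-D)"
    using assms by (intro mult_mono) auto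
  moreover have "0 \<le> y2*A*(B-D)" using assms by simp
  ultimately show ?thesis by (simp add: algebra_simps)
qed

lemma key_sum:
  fixes N x1 y1 x2 y2 s1 s2 P1 P2 :: real
  assumes "N>0" "x1\<ge>0" "y1\<ge>0" "x2\<ge>0" "y2\<ge>0" "s1 \<ge> x1" "s2 \<ge> x2+y2"
    "x1+y1 \<le> P1" "x2+y2 \<le> P2"
  shows "(1 + y1/(x1+N+s2)) * (1 + y2/(x2+N+s1)) * (1 + (x1+x2)/N) \<le> 1 + (P1+P2)/N"
proof -
  define A where "A = x1+N+s2"
  define B where "B = x2+N+s1"
  define D where "D = N+x1+x2"
  have Ap: "A>0" "B>0" "D>0" using assms by (auto simp: A_def B_def D_def)
  have e1: "1 + y1/A = (A+y1)/A" "1 + y2/B = (B+y2)/B" "1 + (x1+x2)/N = D/N"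
    using Ap assms by (auto simp: field_simps D_def)
  have "(A+y1)*(B+y2)*D \<le> (D+y1+y2)*A*B"
    using assms by (intro poly_sum) (auto simp: A_def B_def D_def)
  hence "((A+y1)*(B+y2)*D)/(A*B*N) \<le> ((D+y1+y2)*A*B)/(A*B*N)"
    using Ap assms by (intro divide_right_mono) auto
  moreover have "(A+y1)/A * ((B+y2)/B) * (D/N) = ((A+y1)*(B+y2)*D)/(A*B*N)" by simp
  moreover have "((D+y1+y2)*A*B)/(A*B*N) = (D+y1+y2)/N" using Ap by simp
  ultimately have "(A+y1)/A * ((B+y2)/B) * (D/N) \<le> (D+y1+y2)/N" by simp
  also have "\<dots> = 1 + (x1+y1+x2+y2)/N" using assms by (simp add: field_simps D_def)
  also have "\<dots> \<le> 1 + (P1+P2)/N" using assms by (simp add: divide_right_mono)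
  finally show ?thesis using e1 by (simp add: A_def B_def)
qed

lemma key_single:
  fixes N x1 y1 s2 P1 :: real
  assumes "N>0" "x1\<ge>0" "y1\<ge>0" "s2 \<ge> 0" "x1+y1 \<le> P1"
  shows "(1 + y1/(x1+N+s2)) * (1 + x1/N) \<le> 1 + P1/N"
proof -
  have "y1/(x1+N+s2) \<le> y1/(x1+N)" using assms by (intro divide_left_mono) auto
  hence "(1 + y1/(x1+N+s2)) * (1 + x1/N) \<le> (1 + y1/(x1+N)) * (1 + x1/N)"
    using assms by (intro mult_right_mono) auto
  also have "\<dots> = 1 + (x1+y1)/N"
  proof -
    have q: "x1+N > 0" using assms by simp
    have "1 + y1/(x1+N) = (x1+N+y1)/(x1+N)" using q by (simp add: field_simps)
    moreover have "1 + x1/N = (x1+N)/N" using assms by (simp add: field_simps)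
    moreover have "1 + (x1+y1)/N = (x1+N+y1)/N" using assms by (simp add: field_simps)
    ultimately show ?thesis using q by simp
  qed
  also have "\<dots> \<le> 1 + P1/N" using assms by (simp add: divide_right_mono)
  finally show ?thesis .
qed

lemma Lf0: "Lf 0 b = 0" by (simp add: Lf_def)

theorem mainTheorem13:
  fixes P1 P2 N s1 s2 :: real
  assumes "P1 > 0" and "P2 > 0" and "N > 0"
    and "s1 \<ge> P1 * (3/2 + P2 / N)" and "s2 \<ge> P2 * (3/2 + P1 / N)"
  shows "R_Car P1 P2 N s1 s2 = C_MAC P1 P2 N"
proof
  have s1b: "s1 \<ge> P1"
  proof -
    have "P1 * (P2/N) \<ge> 0" using assms by simp
    moreover have "P1 * (3/2 + P2/N) = P1 + (P1/2 + P1*(P2/N))" by (simp add: algebra_simps)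
    ultimately show ?thesis using assms by linarith
  qed
  have s2b: "s2 \<ge> P2"
  proof -
    have "P2 * (P1/N) \<ge> 0" using assms by simp
    moreover have "P2 * (3/2 + P1/N) = P2 + (P2/2 + P2*(P1/N))" by (simp add: algebra_simps)
    ultimately show ?thesis using assms by linarith
  qed
  show "R_Car P1 P2 N s1 s2 \<subseteq> C_MAC P1 P2 N"
  proof
    fix z assume "z \<in> R_Car P1 P2 N s1 s2"
    then obtain R1 R2 R10 R11 R20 R22 a1 a2 b1 b2 u where z: "z = (R1,R2)" and
      nn: "0 \<le> R10" "0 \<le> R11" "R10 + R11 = R1" "0 \<le> R20" "0 \<le> R22" "R20 + R22 = R2"
      and ab: "a1 \<in> {0..1}" "a2 \<in> {0..1}" "b1 \<in> {0..1}" "b2 \<in> {0..1}"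
      and c1: "R10 \<le> Lf (a1 * (1 - b1) * P1) (a1 * b1 * P1 + N + s2)"
      and c2: "R20 \<le> Lf (a2 * (1 - b2) * P2) (a2 * b2 * P2 + N + s1)"
      and c3: "R11 \<le> Lf (a1 * b1 * P1) N"
      and c4: "R22 \<le> Lf (a2 * b2 * P2) N"
      and c8: "R11 + R22 \<le> Lf (a1 * b1 * P1 + a2 * b2 * P2) N"
      unfolding R_Car_def Let_def by blast
    define x1 where "x1 = a1*b1*P1"
    define y1 where "y1 = a1*(1-b1)*P1"
    define x2 where "x2 = a2*b2*P2"
    define y2 where "y2 = a2*(1-b2)*P2"
    have pos: "x1\<ge>0" "y1\<ge>0" "x2\<ge>0" "y2\<ge>0"
      using ab assms by (auto simp: x1_def y1_def x2_def y2_def)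
    have xy1: "x1+y1 = a1*P1" by (simp add: x1_def y1_def algebra_simps)
    have xy2: "x2+y2 = a2*P2" by (simp add: x2_def y2_def algebra_simps)
    have le1: "x1+y1 \<le> P1" using xy1 ab assms
      by (simp add: mult_left_le_one_le)
    have le2: "x2+y2 \<le> P2" using xy2 ab assms
      by (simp add: mult_left_le_one_le)
    have p1: "0 < 1 + y1/(x1+N+s2)"
    proof -
      have "x1+N+s2 > 0" using pos assms s2b by simp
      hence "y1/(x1+N+s2) \<ge> 0" using pos by simp
      thus ?thesis by simp
    qed
    have p2: "0 < 1 + y2/(x2+N+s1)"
    proof -
      have "x2+N+s1 > 0" using pos assms s1b by simp
      hence "y2/(x2+N+s1) \<ge> 0" using pos by simp
      thus ?thesis by simp
    qed
    have p3: "0 < 1 + x1/N"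
    proof -
      have "x1/N \<ge> 0" using pos assms by simp
      thus ?thesis by simp
    qed
    have p4: "0 < 1 + x2/N"
    proof -
      have "x2/N \<ge> 0" using pos assms by simp
      thus ?thesis by simp
    qed
    have p5: "0 < 1 + (x1+x2)/N"
    proof -
      have "(x1+x2)/N \<ge> 0" using pos assms by simp
      thus ?thesis by simp
    qed
    have r1: "R1 \<le> 1/2 * log 2 (1 + P1/N)"
    proof -
      have "log 2 (1 + y1/(x1+N+s2)) + log 2 (1 + x1/N) \<le> log 2 (1 + P1/N)"
        using p1 p3 key_single[OF assms(3) pos(1,2) _ le1] s2b assms
        by (intro log2_add2) auto
      thus ?thesis using c1 c3 nn unfolding Lf_def x1_def y1_def by simp
    qed
    have r2: "R2 \<le> 1/2 * log 2 (1 + P2/N)"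
    proof -
      have "log 2 (1 + y2/(x2+N+s1)) + log 2 (1 + x2/N) \<le> log 2 (1 + P2/N)"
        using p2 p4 key_single[OF assms(3) pos(3,4) _ le2] s1b assms
        by (intro log2_add2) auto
      thus ?thesis using c2 c4 nn unfolding Lf_def x2_def y2_def by simp
    qed
    have r3: "R1 + R2 \<le> 1/2 * log 2 (1 + (P1+P2)/N)"
    proof -
      have "log 2 (1 + y1/(x1+N+s2)) + log 2 (1 + y2/(x2+N+s1)) + log 2 (1 + (x1+x2)/N)
              \<le> log 2 (1 + (P1+P2)/N)"
        using p1 p2 p5 key_sum[OF assms(3) pos _ _ le1 le2] s1b s2b le1 le2 pos
        by (intro log2_add3) auto
      moreover have "R1 + R2 = R10 + R20 + (R11 + R22)" using nn by simp
      ultimately show ?thesis using c1 c2 c8 unfolding Lf_def x1_def y1_def x2_def y2_def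
        by simp
    qed
    show "z \<in> C_MAC P1 P2 N" unfolding z C_MAC_def using nn r1 r2 r3 by auto
  qed
  show "C_MAC P1 P2 N \<subseteq> R_Car P1 P2 N s1 s2"
  proof
    fix z assume "z \<in> C_MAC P1 P2 N"
    then obtain R1 R2 where z: "z = (R1,R2)" and
      h: "0 \<le> R1" "0 \<le> R2" "R1 \<le> (1/2) * log 2 (1 + P1 / N)" "R2 \<le> (1/2) * log 2 (1 + P2 / N)"
      "R1 + R2 \<le> (1/2) * log 2 (1 + (P1 + P2) / N)"
      unfolding C_MAC_def by blast
    have G0: "Gf 1 1 P1 P2 = 0" by (simp add: Gf_def)
    show "z \<in> R_Car P1 P2 N s1 s2"
      unfolding z R_Car_def Let_def
      apply (simp only: mem_Collect_eq case_prod_conv)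
      apply (rule exI[of _ 0], rule exI[of _ R1], rule exI[of _ 0], rule exI[of _ R2])
      apply (rule exI[of _ 1], rule exI[of _ 1], rule exI[of _ 1], rule exI[of _ 1], rule exI[of _ 0])
      using h by (simp add: G0 Lf_def)
  qed
qed

end
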